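(* Let $k\ge 1$ and $s>2^{k-1}(2^k+1)$ be integers. Let $H$ be any graph obtained from the vertex-disjoint union of $s$ cliques $K(0),K(1),\dots,K(s-1)$, each on $2k+1$ vertices, by adding, for each $0\le i\le s-1$, a matching $M_i$ of $k$ edges between $K(i)$ and $K(i+1)$, where $K(s)=K(0)$. Then the edge connectivity of $H$ is $2k$ and $m(H)=2^k$.
   Context: All graphs are finite and simple. The edge connectivity is the minimum number of edges whose removal disconnects the graph. For graphs $G_1=(V,E_1)$, $G_2=(V,E_2)$, their symmetric difference is $(V,E_1\oplus E_2)$, where $E_1\oplus E_2$ is the set of edges in exactly one of $E_1,E_2$. A connectivity code for $H=(V,E)$ is a collection of distinct spanning subgraphs $(V,E')$, $E'\subseteq E$, such that the symmetric difference of any two distinct members is a connected graph on $V$; $m(H)$ is the maximum cardinality of a connectivity code for $H$. *)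

theory Defs
  imports Main
begin

(* Graphs are given as a vertex set V and an edge set E of 2-element subsets. *)

definition adj :: "'a set set \<Rightarrow> 'a \<Rightarrow> 'a \<Rightarrow> bool" where
  "adj E x y \<longleftrightarrow> {x, y} \<in> E"

definition connected_graph :: "'a set \<Rightarrow> 'a set set \<Rightarrow> bool" where
  "connected_graph V E \<longleftrightarrow> V \<noteq> {} \<and> (\<forall>u\<in>V. \<forall>v\<in>V. (adj E)\<^sup>*\<^sup>* u v)"

definition edge_connectivity :: "'a set \<Rightarrow> 'a set set \<Rightarrow> nat" where
  "edge_connectivity V E =
     (LEAST n. \<exists>F. F \<subseteq> E \<and> card F = n \<and> \<not> connected_graph V (E - F))"

definition sym_diff :: "'a set \<Rightarrow> 'a set \<Rightarrow> 'a set" where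
  "sym_diff A B = (A - B) \<union> (B - A)"

definition connectivity_code :: "'a set \<Rightarrow> 'a set set \<Rightarrow> 'a set set set \<Rightarrow> bool" where
  "connectivity_code V E C \<longleftrightarrow>
     (\<forall>X\<in>C. X \<subseteq> E) \<and>
     (\<forall>X\<in>C. \<forall>Y\<in>C. X \<noteq> Y \<longrightarrow> connected_graph V (sym_diff X Y))"

definition max_code :: "'a set \<Rightarrow> 'a set set \<Rightarrow> nat" where
  "max_code V E = Max {card C | C. connectivity_code V E C}"

end

theory Submission
  imports Defs
begin

lemma conn_sym: "(adj D)\<^sup>*\<^sup>* u v \<Longrightarrow> (adj D)\<^sup>*\<^sup>* v u"
proof (induction rule: rtranclp_induct)
  case base then show ?case by simp
next
  case (step y z)
  have "adj D z y" using step(2) unfolding adj_def by (metis insert_commute)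
  from converse_rtranclp_into_rtranclp[OF this step(3)] show ?case .
qed

lemma conn_mono: "D \<subseteq> D' \<Longrightarrow> (adj D)\<^sup>*\<^sup>* u v \<Longrightarrow> (adj D')\<^sup>*\<^sup>* u v"
  by (erule rtranclp_mono[THEN predicate2D, rotated]) (auto simp: adj_def)

lemma connected_mono:
  assumes "D \<subseteq> D'" "connected_graph V D" shows "connected_graph V D'"
proof -
  have "\<forall>u\<in>V. \<forall>v\<in>V. (adj D)\<^sup>*\<^sup>* u v" "V \<noteq> {}" using assms(2) unfolding connected_graph_def by auto
  then show ?thesis unfolding connected_graph_def using conn_mono[OF assms(1)] by simp
qed

lemma conn_edge: "{u, v} \<in> D \<Longrightarrow> (adj D)\<^sup>*\<^sup>* u v"
  by (simp add: adj_def r_into_rtranclp)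

lemma modS: "(x::nat) < s \<Longrightarrow> (x+1) mod s = (if x+1 < s then x+1 else 0)"
proof (cases "x+1 < s")
  case False
  assume "x < s"
  then have "x + 1 = s" using False by linarith
  then show ?thesis by simp
qed simp

locale rsetup =
  fixes k s :: nat and M :: "nat \<Rightarrow> (nat \<times> nat) set set"
  assumes k1: "k \<ge> 1"
    and sbig: "s > 2 ^ (k - 1) * (2 ^ k + 1)"
    and cardM: "\<forall>i<s. card (M i) = k"
    and Msub: "\<forall>i<s. M i \<subseteq> {{(i, a), ((i + 1) mod s, b)} | a b. a < 2 * k + 1 \<and> b < 2 * k + 1}"
    and Mdisj: "\<forall>i<s. \<forall>e\<in>M i. \<forall>e'\<in>M i. e \<noteq> e' \<longrightarrow> e \<inter> e' = {}"
begin

abbreviation "N \<equiv> 2 * k + 1"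
abbreviation "V \<equiv> {0..<s} \<times> {0..<2 * k + 1}"
abbreviation "CE \<equiv> {{(i, a), (i, b)} | i a b. i < s \<and> a < 2 * k + 1 \<and> b < 2 * k + 1 \<and> a \<noteq> b}"
abbreviation "E \<equiv> CE \<union> (\<Union>i<s. M i)"

lemma s4: "s \<ge> 4"
proof -
  have "(2::nat) ^ (k - 1) \<ge> 1" by simp
  moreover have "(2::nat) ^ k \<ge> 2" using k1
    by (metis power_one_right power_increasing nat_le_linear one_le_numeral)
  ultimately have "(2::nat) ^ (k - 1) * (2 ^ k + 1) \<ge> 3"
    by (metis add_le_mono1 mult_1 mult_le_mono numeral_Bit1 numeral_One one_add_one)
  then show ?thesis using sbig by linarith
qed

lemma Medge: "i < s \<Longrightarrow> e \<in> M i \<Longrightarrow> \<exists>a b. a < N \<and> b < N \<and> e = {(i, a), ((i + 1) mod s, b)}"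
  using Msub by blast

lemma cross_not_clique: "i < s \<Longrightarrow> {(i, a), ((i + 1) mod s, b)} \<noteq> {(c, x), (c, y)}"
proof
  assume "i < s" "{(i, a), ((i + 1) mod s, b)} = {(c, x), (c, y)}"
  then have "c = i" "(i + 1) mod s = c" by (auto simp: doubleton_eq_iff)
  then have "i = (if i+1 < s then i+1 else 0)" using modS[OF \<open>i<s\<close>] by simp
  then show False using s4 by (simp split: if_splits)
qed

lemma M_disjoint: "i < s \<Longrightarrow> j < s \<Longrightarrow> i \<noteq> j \<Longrightarrow> M i \<inter> M j = {}"
proof (rule ccontr)
  assume a: "i < s" "j < s" "i \<noteq> j" "M i \<inter> M j \<noteq> {}"
  then obtain e where e: "e \<in> M i" "e \<in> M j" by blast
  obtain a b where ab: "e = {(i, a), ((i + 1) mod s, b)}" using Medge[OF a(1) e(1)] by blast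
  obtain a' b' where ab': "e = {(j, a'), ((j + 1) mod s, b')}" using Medge[OF a(2) e(2)] by blast
  have m1: "(i, a) \<in> e" "((i+1) mod s, b) \<in> e" using ab by auto
  have "i = j \<or> i = (j+1) mod s" using m1(1) unfolding ab' by auto
  then have ij: "i = (j+1) mod s" using a(3) by simp
  have "(i+1) mod s = j \<or> (i+1) mod s = (j+1) mod s" using m1(2) unfolding ab' by auto
  moreover have "(i+1) mod s \<noteq> i" using modS[OF a(1)] s4 by simp
  ultimately have ji: "j = (i + 1) mod s" using ij by metis
  have A: "(j+1 < s \<and> i = j+1) \<or> (\<not> j+1 < s \<and> i = 0)" using ij modS[OF a(2)] by simp
  have B: "(i+1 < s \<and> j = i+1) \<or> (\<not> i+1 < s \<and> j = 0)" using ji modS[OF a(1)] by simp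
  show False using A B s4 a by linarith
qed

lemma M_finite: "i < s \<Longrightarrow> finite (M i)"
  using cardM k1 card_ge_0_finite by force

lemma E_sub: "E \<subseteq> Pow V"
proof
  fix e assume "e \<in> E"
  then show "e \<in> Pow V"
  proof
    assume "e \<in> CE"
    then obtain i a b where "i < s" "a < N" "b < N" "e = {(i, a), (i, b)}" by blast
    then show ?thesis by simp
  next
    assume "e \<in> (\<Union>i<s. M i)"
    then obtain i where "i < s" "e \<in> M i" by blast
    then obtain a b where ab: "a < N" "b < N" "e = {(i, a), ((i + 1) mod s, b)}" using Medge by blast
    have "(i + 1) mod s < s" using \<open>i<s\<close> by simp
    then show ?thesis using ab \<open>i<s\<close> by simp
  qed
qed

lemma E_finite: "finite E"
proof -
  have "finite (Pow V)" by simp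
  then show ?thesis using E_sub finite_subset by blast
qed

lemma walk_stays:
  assumes ij: "i < j" "j < s" and D: "D \<subseteq> E" "D \<inter> (M i \<union> M j) = {}"
    and w: "(adj D)\<^sup>*\<^sup>* u v" and u: "i < fst u \<and> fst u \<le> j"
  shows "i < fst v \<and> fst v \<le> j"
  using w u
proof (induction rule: rtranclp_induct)
  case base then show ?case by simp
next
  case (step y z)
  have yA: "i < fst y \<and> fst y \<le> j" using step by simp
  have yz: "{y, z} \<in> D" using step(2) by (simp add: adj_def)
  then have "{y, z} \<in> E" using D by blast
  then show ?case
  proof
    assume "{y, z} \<in> CE"
    then obtain c a b where "{y, z} = {(c, a), (c, b)}" by blast
    then have "fst z = fst y" by (auto simp: doubleton_eq_iff)
    then show ?thesis using yA by simp
  next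
    assume "{y, z} \<in> (\<Union>l<s. M l)"
    then obtain l where l: "l < s" "{y, z} \<in> M l" by blast
    have "l \<noteq> i" "l \<noteq> j" using l(2) yz D(2) by blast+
    obtain a b where ab: "{y, z} = {(l, a), ((l + 1) mod s, b)}" using Medge[OF l] by blast
    have ym: "y = (l, a) \<or> y = ((l + 1) mod s, b)" using ab by (auto simp: doubleton_eq_iff)
    have zm: "z = (l, a) \<or> z = ((l + 1) mod s, b)" using ab by (auto simp: doubleton_eq_iff)
    have key: "(i < l \<and> l \<le> j) \<longleftrightarrow> (i < (l+1) mod s \<and> (l+1) mod s \<le> j)"
      using modS[OF l(1)] \<open>l \<noteq> i\<close> \<open>l \<noteq> j\<close> ij by auto
    show ?thesis using ym zm key yA by auto
  qed
qed

lemma not_conn: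
  assumes ij: "i < j" "j < s" and D: "D \<subseteq> E" "D \<inter> (M i \<union> M j) = {}"
  shows "\<not> connected_graph V D"
proof
  assume "connected_graph V D"
  moreover have "(j, 0) \<in> V" "(i, 0) \<in> V" using ij by auto
  ultimately have "(adj D)\<^sup>*\<^sup>* (j, 0) (i, 0)" unfolding connected_graph_def by blast
  from walk_stays[OF ij D this] ij show False by simp
qed

lemma not_conn2:
  assumes ij: "i \<noteq> j" "i < s" "j < s" and D: "D \<subseteq> E" "D \<inter> (M i \<union> M j) = {}"
  shows "\<not> connected_graph V D"
proof (cases "i < j")
  case True then show ?thesis using not_conn ij D by blast
next
  case False then have "j < i" using ij by simp
  then show ?thesis using not_conn[of j i D] ij D by (simp add: Un_commute)
qed

lemma card_MM: "i < s \<Longrightarrow> j < s \<Longrightarrow> i \<noteq> j \<Longrightarrow> card (M i \<union> M j) = 2 * k"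
  using card_Un_disjoint[OF M_finite M_finite M_disjoint] cardM by simp

lemma clique_conn:
  assumes F: "F \<subseteq> E" "card F < 2 * k" and i: "i < s" and ab: "a < N" "b < N"
  shows "(adj (E - F))\<^sup>*\<^sup>* (i, a) (i, b)"
proof (rule ccontr)
  let ?c = "(adj (E - F))\<^sup>*\<^sup>*"
  assume nc: "\<not> ?c (i, a) (i, b)"
  then have ab': "a \<noteq> b" by auto
  have finF: "finite F" using F E_finite finite_subset by blast
  have inE: "{(i, x), (i, y)} \<in> E" if "x < N" "y < N" "x \<noteq> y" for x y
    by (rule UnI1) (use i that in blast)
  define f where "f c = (if c = b then {(i, a), (i, b)} else if {(i, a), (i, c)} \<in> F then {(i, a), (i, c)} else {(i, c), (i, b)})" for c
  let ?A = "{c. c < N \<and> c \<noteq> a}"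
  have fF: "f c \<in> F" if c: "c \<in> ?A" for c
  proof (cases "c = b")
    case True
    have "{(i, a), (i, b)} \<in> F"
    proof (rule ccontr)
      assume "{(i, a), (i, b)} \<notin> F"
      then have "{(i, a), (i, b)} \<in> E - F" using inE[OF ab ab'] by (intro DiffI)
      from conn_edge[OF this] nc show False by simp
    qed
    then show ?thesis using True by (simp add: f_def)
  next
    case False
    show ?thesis
    proof (cases "{(i, a), (i, c)} \<in> F")
      case True then show ?thesis using False by (simp add: f_def)
    next
      case nF: False
      have "c < N" "a \<noteq> c" using c by auto
      then have "{(i, a), (i, c)} \<in> E - F" using inE[OF ab(1)] nF by (intro DiffI)
      then have 1: "?c (i, a) (i, c)" by (rule conn_edge)
      have "{(i, c), (i, b)} \<in> F"
      proof (rule ccontr)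
        assume "{(i, c), (i, b)} \<notin> F"
        moreover have "c < N" "c \<noteq> b" using c False by auto
        ultimately have "{(i, c), (i, b)} \<in> E - F" using inE ab(2) by (intro DiffI)
        then have "?c (i, c) (i, b)" by (rule conn_edge)
        then show False using 1 nc by (meson rtranclp_trans)
      qed
      then show ?thesis using False nF by (simp add: f_def)
    qed
  qed
  have fc: "(i, c) \<in> f c \<and> f c \<subseteq> {(i, a), (i, b), (i, c)}" for c
    by (auto simp: f_def)
  have "inj_on f ?A"
  proof
    fix c c' assume c: "c \<in> ?A" "c' \<in> ?A" "f c = f c'"
    then have "(i, c) \<in> f c'" "(i, c') \<in> f c" using fc by auto
    then have "c = b \<or> c = c'" "c' = b \<or> c' = c" using fc[of c] fc[of c'] c by auto
    then show "c = c'" by auto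
  qed
  moreover have "f ` ?A \<subseteq> F" using fF by blast
  ultimately have "card ?A \<le> card F" using card_inj_on_le finF by blast
  moreover have "?A = {0..<N} - {a}" by auto
  then have "card ?A = 2 * k" using ab by simp
  ultimately show False using F by simp
qed

lemma big_conn:
  assumes F: "F \<subseteq> E" "card F < 2 * k"
  shows "connected_graph V (E - F)"
proof -
  let ?c = "(adj (E - F))\<^sup>*\<^sup>*"
  have finF: "finite F" using F E_finite finite_subset by blast
  have link: "?c (i, 0) ((i + 1) mod s, 0)" if i: "i < s" "\<not> M i \<subseteq> F" for i
  proof -
    obtain e where e: "e \<in> M i" "e \<notin> F" using i by blast
    obtain a b where ab: "a < N" "b < N" "e = {(i, a), ((i + 1) mod s, b)}" using Medge[OF i(1) e(1)] by blast
    have "e \<in> (\<Union>i<s. M i)" using e(1) i(1) by blast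
    then have "e \<in> E - F" using e(2) by blast
    then have 1: "?c (i, a) ((i + 1) mod s, b)" using ab(3) conn_edge[of "(i, a)" "((i + 1) mod s, b)" "E - F"] by simp
    have 2: "?c (i, 0) (i, a)" using clique_conn[OF F i(1)] ab by simp
    have i1: "(i + 1) mod s < s" using i by simp
    have 3: "?c ((i + 1) mod s, b) ((i + 1) mod s, 0)" using clique_conn[OF F i1] ab by simp
    show ?thesis using rtranclp_trans[OF rtranclp_trans[OF 2 1] 3] .
  qed
  have atmost: "i = j" if ij: "i < s" "j < s" "M i \<subseteq> F" "M j \<subseteq> F" for i j
  proof (rule ccontr)
    assume ne: "i \<noteq> j"
    have c: "card (M i \<union> M j) = 2 * k" using card_MM[OF ij(1,2) ne] .
    have sub: "M i \<union> M j \<subseteq> F" using ij(3,4) by (rule Un_least)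
    have "card (M i \<union> M j) \<le> card F" using card_mono[OF finF sub] .
    then show False using c F(2) by linarith
  qed
  obtain i0 where i0: "i0 < s" "\<And>i. i < s \<Longrightarrow> i \<noteq> i0 \<Longrightarrow> \<not> M i \<subseteq> F"
  proof (cases "\<exists>i<s. M i \<subseteq> F")
    case True
    then obtain i0 where "i0 < s" "M i0 \<subseteq> F" by blast
    then show ?thesis using that atmost by blast
  next
    case False
    then show ?thesis using s4 by (intro that[of 0]) auto
  qed
  have down: "?c (i0 - d, 0) (i0, 0)" if "d \<le> i0" for d
    using that
  proof (induction d)
    case 0 then show ?case by simp
  next
    case (Suc d)
    let ?x = "i0 - Suc d"
    have x: "?x < s" "?x \<noteq> i0" "?x + 1 < s" using Suc.prems i0(1) by auto
    have "?c (?x, 0) ((?x + 1) mod s, 0)" using link[OF x(1) i0(2)[OF x(1,2)]] .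
    moreover have "(?x + 1) mod s = i0 - d" using x(3) Suc.prems by simp
    ultimately have "?c (?x, 0) (i0 - d, 0)" by simp
    moreover have "?c (i0 - d, 0) (i0, 0)" using Suc.IH Suc.prems by simp
    ultimately show ?case by (rule rtranclp_trans)
  qed
  have up: "?c (s - 1 - d, 0) (0, 0)" if "i0 < s - 1 - d" for d
    using that
  proof (induction d)
    case 0
    have x: "s - 1 < s" "s - 1 \<noteq> i0" using 0 s4 by auto
    have "?c (s - 1, 0) ((s - 1 + 1) mod s, 0)" using link[OF x(1) i0(2)[OF x]] .
    moreover have "(s - 1 + 1) mod s = 0" using s4 by simp
    ultimately show ?case by simp
  next
    case (Suc d)
    let ?x = "s - 1 - Suc d"
    have x: "?x < s" "?x \<noteq> i0" "?x + 1 < s" using Suc.prems i0(1) by auto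
    have "?c (?x, 0) ((?x + 1) mod s, 0)" using link[OF x(1) i0(2)[OF x(1,2)]] .
    moreover have "(?x + 1) mod s = s - 1 - d" using x(3) Suc.prems by simp
    ultimately have "?c (?x, 0) (s - 1 - d, 0)" by simp
    moreover have "?c (s - 1 - d, 0) (0, 0)" using Suc.IH Suc.prems by simp
    ultimately show ?case by (rule rtranclp_trans)
  qed
  have all: "?c v (i0, 0)" if vV: "v \<in> V" for v
  proof -
    obtain c a where v: "v = (c, a)" "c < s" "a < N" using vV by auto
    have 1: "?c (c, a) (c, 0)" using clique_conn[OF F v(2)] v(3) by simp
    have 2: "?c (c, 0) (i0, 0)"
    proof (cases "c \<le> i0")
      case True
      have "?c (i0 - (i0 - c), 0) (i0, 0)" using down[of "i0 - c"] by simp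
      then show ?thesis using True by simp
    next
      case False
      have "?c (s - 1 - (s - 1 - c), 0) (0, 0)" using up[of "s - 1 - c"] v(2) False by simp
      then have "?c (c, 0) (0, 0)" using v(2) by simp
      moreover have "?c (0, 0) (i0, 0)" using down[of i0] by simp
      ultimately show ?thesis by (rule rtranclp_trans)
    qed
    have "?c (c, a) (i0, 0)" using rtranclp_trans[OF 1 2] .
    then show ?thesis using v(1) by simp
  qed
  have uv: "?c u v" if "u \<in> V" "v \<in> V" for u v
    using rtranclp_trans[OF all[OF that(1)] conn_sym[OF all[OF that(2)]]] .
  have ne: "V \<noteq> {}" using s4 by auto
  show ?thesis unfolding connected_graph_def
  proof (intro conjI ballI)
    show "V \<noteq> {}" by (rule ne)
    fix u v assume "u \<in> V" "v \<in> V"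
    then show "?c u v" by (rule uv)
  qed
qed

lemma edge_conn: "edge_connectivity V E = 2 * k"
  unfolding edge_connectivity_def
proof (rule Least_equality)
  let ?F = "M 0 \<union> M 1"
  have s01: "0 < s" "1 < s" "(0::nat) \<noteq> 1" using s4 by auto
  have "M 0 \<subseteq> (\<Union>i<s. M i)" "M 1 \<subseteq> (\<Union>i<s. M i)"
    using s01 by (auto intro!: UN_upper)
  then have "?F \<subseteq> (\<Union>i<s. M i)" by (rule Un_least)
  then have sub: "?F \<subseteq> E" by (rule le_supI2)
  have cF: "card ?F = 2 * k" using card_MM[OF s01] .
  have d1: "E - ?F \<subseteq> E" by (rule Diff_subset)
  have d2: "(E - ?F) \<inter> (M 0 \<union> M 1) = {}" by (rule Int_commute[THEN trans, OF Diff_disjoint])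
  have nc: "\<not> connected_graph V (E - ?F)" using not_conn[OF _ _ d1 d2] s01 by simp
  show "\<exists>F. F \<subseteq> E \<and> card F = 2 * k \<and> \<not> connected_graph V (E - F)"
    using sub cF nc by (intro exI[of _ ?F]) simp
next
  fix m assume "\<exists>F. F \<subseteq> E \<and> card F = m \<and> \<not> connected_graph V (E - F)"
  then obtain F where F: "F \<subseteq> E" "card F = m" "\<not> connected_graph V (E - F)" by blast
  show "2 * k \<le> m"
  proof (rule ccontr)
    assume "\<not> 2 * k \<le> m"
    then have "card F < 2 * k" using F(2) by simp
    then have "connected_graph V (E - F)" using big_conn[OF F(1)] by simp
    then show False using F(3) by simp
  qed
qed

lemma code_upper:
  assumes C: "connectivity_code V E C"
  shows "card C \<le> 2 ^ k"
proof (rule ccontr)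
  have Csub: "\<And>X. X \<in> C \<Longrightarrow> X \<subseteq> E" using C unfolding connectivity_code_def by blast
  have Cconn: "\<And>X Y. X \<in> C \<Longrightarrow> Y \<in> C \<Longrightarrow> X \<noteq> Y \<Longrightarrow> connected_graph V (sym_diff X Y)"
    using C unfolding connectivity_code_def by blast
  assume "\<not> card C \<le> 2 ^ k"
  then have "2 ^ k + 1 \<le> card C" by simp
  then obtain C' where C': "C' \<subseteq> C" "card C' = 2 ^ k + 1" "finite C'"
    by (rule obtain_subset_with_card_n)
  have ex: "\<exists>X Y. X \<in> C' \<and> Y \<in> C' \<and> X \<noteq> Y \<and> X \<inter> M i = Y \<inter> M i" if i: "i < s" for i
  proof (rule ccontr)
    assume "\<not> ?thesis"
    then have inj: "inj_on (\<lambda>X. X \<inter> M i) C'" unfolding inj_on_def by blast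
    have im: "(\<lambda>X. X \<inter> M i) ` C' \<subseteq> Pow (M i)" by blast
    have fin: "finite (Pow (M i))" using M_finite[OF i] by simp
    have "card C' \<le> card (Pow (M i))" using card_inj_on_le[OF inj im fin] .
    also have "\<dots> = 2 ^ k" using M_finite[OF i] cardM i by (simp add: card_Pow)
    finally show False using C'(2) by simp
  qed
  have "\<forall>i. \<exists>X Y. i < s \<longrightarrow> X \<in> C' \<and> Y \<in> C' \<and> X \<noteq> Y \<and> X \<inter> M i = Y \<inter> M i"
    using ex by blast
  then obtain X Y where XY: "\<forall>i. i < s \<longrightarrow> X i \<in> C' \<and> Y i \<in> C' \<and> X i \<noteq> Y i \<and> X i \<inter> M i = Y i \<inter> M i"
    by metis
  define p where "p i = {X i, Y i}" for i
  have "inj_on p {..<s}"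
  proof
    fix i j assume ij: "i \<in> {..<s}" "j \<in> {..<s}" "p i = p j"
    show "i = j"
    proof (rule ccontr)
      assume ne: "i \<noteq> j"
      have lt: "i < s" "j < s" using ij by auto
      have Xi: "X i \<in> C'" "Y i \<in> C'" "X i \<noteq> Y i" "X i \<inter> M i = Y i \<inter> M i" using XY lt(1) by auto
      have Xj: "X j \<inter> M j = Y j \<inter> M j" using XY lt(2) by auto
      have "{X i, Y i} = {X j, Y j}" using ij(3) unfolding p_def .
      then have "(X i = X j \<and> Y i = Y j) \<or> (X i = Y j \<and> Y i = X j)" by (rule doubleton_eq_iff[THEN iffD1])
      then have Xij: "X i \<inter> M j = Y i \<inter> M j" using Xj by auto
      have c1: "X i \<in> C" and c2: "Y i \<in> C" using Xi C'(1) by auto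
      have con: "connected_graph V (sym_diff (X i) (Y i))" using Cconn[OF c1 c2 Xi(3)] by (simp add: sym_diff_def)
      have "X i - Y i \<subseteq> E" using Diff_subset Csub[OF c1] by (rule order_trans)
      moreover have "Y i - X i \<subseteq> E" using Diff_subset Csub[OF c2] by (rule order_trans)
      ultimately have sub: "sym_diff (X i) (Y i) \<subseteq> E" unfolding sym_diff_def by (rule Un_least)
      have dis: "sym_diff (X i) (Y i) \<inter> (M i \<union> M j) = {}"
        using Xi(4) Xij unfolding sym_diff_def by blast
      show False using not_conn2[OF ne lt sub dis] con by simp
    qed
  qed
  moreover have "p ` {..<s} \<subseteq> {P. P \<subseteq> C' \<and> card P = 2}"
  proof
    fix P assume "P \<in> p ` {..<s}"
    then obtain i where i: "i < s" "P = {X i, Y i}" unfolding p_def by auto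
    then show "P \<in> {P. P \<subseteq> C' \<and> card P = 2}" using XY by auto
  qed
  moreover have "finite {P. P \<subseteq> C' \<and> card P = 2}" using C'(3) by simp
  ultimately have "card {..<s} \<le> card {P. P \<subseteq> C' \<and> card P = 2}"
    by (rule card_inj_on_le)
  also have "\<dots> = (2 ^ k + 1) choose 2" using n_subsets[OF C'(3)] C'(2) by simp
  also have "\<dots> = 2 ^ (k - 1) * (2 ^ k + 1)"
  proof -
    have "(2::nat) ^ k = 2 * 2 ^ (k - 1)" using k1 by (metis Suc_diff_1 less_le_trans power_Suc zero_less_one)
    then show ?thesis by (simp add: choose_two)
  qed
  finally show False using sbig by simp
qed

definition g :: "nat \<Rightarrow> nat \<Rightarrow> (nat \<times> nat) set" where
  "g i = (SOME f. bij_betw f {0..<k} (M i))"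

definition CEj :: "nat \<Rightarrow> (nat \<times> nat) set set" where
  "CEj j = {{(i, a), (i, b)} | i a b. i < s \<and> a < N \<and> b < N \<and> a \<noteq> b \<and>
              ((a + b) mod N = 2 * j \<or> (a + b) mod N = 2 * j + 1)}"

definition T :: "nat \<Rightarrow> (nat \<times> nat) set set" where
  "T j = CEj j \<union> (\<lambda>i. g i j) ` {..<s}"

lemma g_bij: assumes i: "i < s" shows "bij_betw (g i) {0..<k} (M i)"
proof -
  have "card (M i) = k" using cardM i by simp
  then have "\<exists>f. bij_betw f {0..<k} (M i)" using ex_bij_betw_nat_finite[OF M_finite[OF i]] by simp
  then show ?thesis unfolding g_def by (rule someI_ex)
qed

lemma g_in: "i < s \<Longrightarrow> j < k \<Longrightarrow> g i j \<in> M i"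
  using g_bij bij_betwE by fastforce

lemma T_sub: assumes j: "j < k" shows "T j \<subseteq> E"
proof -
  have "CEj j \<subseteq> CE"
  proof
    fix e assume "e \<in> CEj j"
    then obtain i a b where "e = {(i, a), (i, b)}" "i < s" "a < N" "b < N" "a \<noteq> b"
      unfolding CEj_def by blast
    then show "e \<in> CE" by blast
  qed
  moreover have "(\<lambda>i. g i j) ` {..<s} \<subseteq> (\<Union>i<s. M i)"
  proof
    fix e assume "e \<in> (\<lambda>i. g i j) ` {..<s}"
    then obtain i where "i < s" "e = g i j" by blast
    then show "e \<in> (\<Union>i<s. M i)" using g_in[OF _ j] by blast
  qed
  ultimately show ?thesis unfolding T_def by (rule Un_mono)
qed

lemma T_disj: assumes jj: "j < k" "j' < k" "j \<noteq> j'" shows "T j \<inter> T j' = {}"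
proof (rule ccontr)
  assume "T j \<inter> T j' \<noteq> {}"
  then obtain e where e: "e \<in> T j" "e \<in> T j'" by blast
  show False
  proof (cases "e \<in> CEj j")
    case True
    then obtain i a b where iab: "e = {(i, a), (i, b)}" "(a + b) mod N = 2 * j \<or> (a + b) mod N = 2 * j + 1"
      unfolding CEj_def by blast
    show False
    proof (cases "e \<in> CEj j'")
      case True
      then obtain i' a' b' where iab': "e = {(i', a'), (i', b')}" "(a' + b') mod N = 2 * j' \<or> (a' + b') mod N = 2 * j' + 1"
        unfolding CEj_def by blast
      have "(a = a' \<and> b = b') \<or> (a = b' \<and> b = a')"
        using iab(1) iab'(1) doubleton_eq_iff[of "(i, a)" "(i, b)" "(i', a')" "(i', b')"] by auto
      then have "a + b = a' + b'" by auto
      then show False using iab(2) iab'(2) jj(3) by auto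
    next
      case False
      then obtain i where i: "i < s" "e = g i j'" using e(2) unfolding T_def by blast
      then obtain x y where "e = {(i, x), ((i + 1) mod s, y)}" using Medge[OF i(1) g_in[OF i(1) jj(2)]] by blast
      then show False using cross_not_clique[OF i(1)] iab(1) by metis
    qed
  next
    case False
    then obtain i where i: "i < s" "e = g i j" using e(1) unfolding T_def by blast
    then obtain x y where xy: "e = {(i, x), ((i + 1) mod s, y)}" using Medge[OF i(1) g_in[OF i(1) jj(1)]] by blast
    show False
    proof (cases "e \<in> CEj j'")
      case True
      then obtain i' a' b' where "e = {(i', a'), (i', b')}" unfolding CEj_def by blast
      then show False using cross_not_clique[OF i(1)] xy by metis
    next
      case False
      then obtain i' where i': "i' < s" "e = g i' j'" using e(2) unfolding T_def by blast
      have "i = i'"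
      proof (rule ccontr)
        assume "i \<noteq> i'"
        then have "M i \<inter> M i' = {}" using M_disjoint i(1) i'(1) by blast
        moreover have "e \<in> M i" "e \<in> M i'" using g_in[OF i(1) jj(1)] g_in[OF i'(1) jj(2)] i(2) i'(2) by auto
        ultimately show False by blast
      qed
      then have "g i j = g i j'" using i i' by simp
      moreover have "inj_on (g i) {0..<k}" using g_bij[OF i(1)] unfolding bij_betw_def by simp
      ultimately show False using jj unfolding inj_on_def by auto
    qed
  qed
qed

lemma T_ne: "j < k \<Longrightarrow> T j \<noteq> {}"
proof -
  have "g 0 j \<in> T j" unfolding T_def using s4 by (intro UnI2 imageI) simp
  then show ?thesis by blast
qed

lemma CEj_in: "i < s \<Longrightarrow> a < N \<Longrightarrow> b < N \<Longrightarrow> a \<noteq> b \<Longrightarrow>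
   (a + b) mod N = 2 * j \<or> (a + b) mod N = 2 * j + 1 \<Longrightarrow> {(i, a), (i, b)} \<in> T j"
  unfolding T_def CEj_def by blast

lemma T_step:
  assumes j: "j < k" and i: "i < s" and x: "x + 1 < N"
  shows "(adj (T j))\<^sup>*\<^sup>* (i, x) (i, x + 1)"
proof -
  let ?c = "(adj (T j))\<^sup>*\<^sup>*"
  define y where "y = (if x \<le> 2 * j then 2 * j - x else 2 * j + N - x)"
  have yN: "y < N" using j x unfolding y_def by auto
  have s1: "(x + y) mod N = 2 * j"
  proof (cases "x \<le> 2 * j")
    case True then have "x + y = 2 * j" unfolding y_def by simp
    then show ?thesis using j by simp
  next
    case False then have "x + y = 2 * j + N" unfolding y_def using x by simp
    moreover have "(2 * j + N) mod N = (2 * j) mod N" by (rule mod_add_self2)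
    moreover have "(2 * j) mod N = 2 * j" using j by (intro mod_less) simp
    ultimately show ?thesis by simp
  qed
  have s2: "(y + (x + 1)) mod N = 2 * j + 1"
  proof (cases "x \<le> 2 * j")
    case True then have "y + (x + 1) = 2 * j + 1" unfolding y_def by simp
    then show ?thesis using j by simp
  next
    case False then have "y + (x + 1) = 2 * j + 1 + N" unfolding y_def using x by simp
    moreover have "(2 * j + 1 + N) mod N = (2 * j + 1) mod N" by (rule mod_add_self2)
    moreover have "(2 * j + 1) mod N = 2 * j + 1" using j by (intro mod_less) simp
    ultimately show ?thesis by simp
  qed
  have 1: "?c (i, x) (i, y)"
  proof (cases "x = y")
    case False
    then show ?thesis using CEj_in[OF i _ yN False, of j] s1 x conn_edge by simp
  qed simp
  have 2: "?c (i, y) (i, x + 1)"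
  proof (cases "y = x + 1")
    case False
    then show ?thesis using CEj_in[OF i yN x False, of j] s2 conn_edge by simp
  qed simp
  show ?thesis using 1 2 by (meson rtranclp_trans)
qed

lemma T_clique: "j < k \<Longrightarrow> i < s \<Longrightarrow> x < N \<Longrightarrow> (adj (T j))\<^sup>*\<^sup>* (i, 0) (i, x)"
proof (induction x)
  case 0 then show ?case by simp
next
  case (Suc x)
  then have "(adj (T j))\<^sup>*\<^sup>* (i, x) (i, x + 1)" using T_step by simp
  then show ?case using Suc by (metis Suc_eq_plus1 Suc_lessD rtranclp_trans)
qed

lemma T_link: assumes "j < k" "i < s" shows "(adj (T j))\<^sup>*\<^sup>* (i, 0) ((i + 1) mod s, 0)"
proof -
  obtain a b where ab: "a < N" "b < N" "g i j = {(i, a), ((i + 1) mod s, b)}"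
    using Medge[OF assms(2) g_in[OF assms(2,1)]] by blast
  have "g i j \<in> T j" unfolding T_def using assms by blast
  then have 1: "(adj (T j))\<^sup>*\<^sup>* (i, a) ((i + 1) mod s, b)" using ab conn_edge by metis
  have "(i + 1) mod s < s" using assms s4 by simp
  then have 2: "(adj (T j))\<^sup>*\<^sup>* ((i + 1) mod s, 0) ((i + 1) mod s, b)" using T_clique assms ab by blast
  have 3: "(adj (T j))\<^sup>*\<^sup>* (i, 0) (i, a)" using T_clique assms ab by blast
  show ?thesis using 1 2 3 conn_sym by (meson rtranclp_trans)
qed

lemma T_conn: assumes j: "j < k" shows "connected_graph V (T j)"
proof -
  let ?c = "(adj (T j))\<^sup>*\<^sup>*"
  have ring: "?c (0, 0) (c, 0)" if "c < s" for c
    using that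
  proof (induction c)
    case 0 then show ?case by simp
  next
    case (Suc c)
    have c1: "c < s" "c + 1 < s" using Suc.prems by auto
    have "?c (c, 0) ((c + 1) mod s, 0)" using T_link[OF j c1(1)] .
    moreover have "(c + 1) mod s = Suc c" using c1(2) by simp
    ultimately have "?c (c, 0) (Suc c, 0)" by simp
    moreover have "?c (0, 0) (c, 0)" using Suc.IH c1(1) by simp
    ultimately show ?case using rtranclp_trans by metis
  qed
  have all: "?c (0, 0) v" if vV: "v \<in> V" for v
  proof -
    obtain c a where v: "v = (c, a)" "c < s" "a < N" using vV by auto
    have "?c (0, 0) (c, a)" using rtranclp_trans[OF ring[OF v(2)] T_clique[OF j v(2,3)]] .
    then show ?thesis using v(1) by simp
  qed
  have uv: "?c u v" if "u \<in> V" "v \<in> V" for u v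
    using rtranclp_trans[OF conn_sym[OF all[OF that(1)]] all[OF that(2)]] .
  have ne: "V \<noteq> {}" using s4 by auto
  show ?thesis unfolding connected_graph_def
  proof (intro conjI ballI)
    show "V \<noteq> {}" by (rule ne)
    fix u v assume "u \<in> V" "v \<in> V"
    then show "?c u v" by (rule uv)
  qed
qed

lemma T_in_symdiff:
  assumes "S \<subseteq> {..<k}" "S' \<subseteq> {..<k}" "j \<in> S" "j \<notin> S'"
  shows "T j \<subseteq> sym_diff (\<Union>j\<in>S. T j) (\<Union>j\<in>S'. T j)"
proof
  fix e assume e: "e \<in> T j"
  have ne: "e \<notin> (\<Union>j\<in>S'. T j)"
  proof
    assume "e \<in> (\<Union>j\<in>S'. T j)"
    then obtain j' where j': "j' \<in> S'" "e \<in> T j'" by blast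
    have "j \<noteq> j'" using j' assms(4) by blast
    moreover have "j < k" "j' < k" using assms(1,2,3) j'(1) by auto
    ultimately have "T j \<inter> T j' = {}" using T_disj by blast
    then show False using e j'(2) by blast
  qed
  have "e \<in> (\<Union>j\<in>S. T j)" using e assms(3) by blast
  then show "e \<in> sym_diff (\<Union>j\<in>S. T j) (\<Union>j\<in>S'. T j)" using ne unfolding sym_diff_def by blast
qed

lemma code_lower: "\<exists>C. connectivity_code V E C \<and> card C = 2 ^ k"
proof -
  define U where "U S = (\<Union>j\<in>S. T j)" for S
  let ?C = "U ` Pow {..<k}"
  have key: "connected_graph V (sym_diff (U S) (U S')) \<and> U S \<noteq> U S'"
    if SS: "S \<subseteq> {..<k}" "S' \<subseteq> {..<k}" "S \<noteq> S'" for S S'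
  proof -
    have sd: "sym_diff (U S) (U S') = sym_diff (U S') (U S)" unfolding sym_diff_def by blast
    obtain j where j: "j < k" "T j \<subseteq> sym_diff (U S) (U S')"
    proof (cases "\<exists>j. j \<in> S \<and> j \<notin> S'")
      case True
      then obtain j where jj: "j \<in> S" "j \<notin> S'" by blast
      have "T j \<subseteq> sym_diff (U S) (U S')" using T_in_symdiff[OF SS(1,2) jj] unfolding U_def .
      moreover have "j < k" using jj(1) SS(1) by blast
      ultimately show ?thesis using that by blast
    next
      case False
      then obtain j where jj: "j \<in> S'" "j \<notin> S" using SS(3) by blast
      have "T j \<subseteq> sym_diff (U S') (U S)" using T_in_symdiff[OF SS(2,1) jj] unfolding U_def .
      then have "T j \<subseteq> sym_diff (U S) (U S')" using sd by simp
      moreover have "j < k" using jj(1) SS(2) by blast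
      ultimately show ?thesis using that by blast
    qed
    have c: "connected_graph V (sym_diff (U S) (U S'))" using connected_mono[OF j(2) T_conn[OF j(1)]] .
    have "U S \<noteq> U S'"
    proof
      assume "U S = U S'"
      then have "sym_diff (U S) (U S') = {}" unfolding sym_diff_def by simp
      then have "T j = {}" using j(2) by simp
      then show False using T_ne[OF j(1)] by simp
    qed
    then show ?thesis using c by simp
  qed
  have sub: "X \<subseteq> E" if "X \<in> ?C" for X
  proof -
    obtain S where S: "S \<subseteq> {..<k}" "X = U S" using \<open>X \<in> ?C\<close> by blast
    have "\<And>j. j \<in> S \<Longrightarrow> T j \<subseteq> E" using S(1) T_sub by blast
    then have "U S \<subseteq> E" unfolding U_def by (rule UN_least)
    then show ?thesis using S(2) by simp
  qed
  have con: "connected_graph V (sym_diff X Y)" if "X \<in> ?C" "Y \<in> ?C" "X \<noteq> Y" for X Y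
  proof -
    obtain S where S: "S \<subseteq> {..<k}" "X = U S" using \<open>X \<in> ?C\<close> by blast
    obtain S' where S': "S' \<subseteq> {..<k}" "Y = U S'" using \<open>Y \<in> ?C\<close> by blast
    have "S \<noteq> S'" using that(3) S(2) S'(2) by blast
    then show ?thesis using key[OF S(1) S'(1)] S(2) S'(2) by simp
  qed
  have code: "connectivity_code V E ?C"
    unfolding connectivity_code_def
  proof (intro conjI ballI impI)
    fix X assume "X \<in> ?C"
    then show "X \<subseteq> E" by (rule sub)
  next
    fix X Y assume "X \<in> ?C" "Y \<in> ?C" "X \<noteq> Y"
    from con[OF this] show "connected_graph V (sym_diff X Y)" by (simp add: sym_diff_def)
  qed
  have "inj_on U (Pow {..<k})"
  proof
    fix S S' assume "S \<in> Pow {..<k}" "S' \<in> Pow {..<k}" "U S = U S'"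
    then show "S = S'" using key[of S S'] by blast
  qed
  then have "card ?C = card (Pow {..<k})" by (rule card_image)
  also have "\<dots> = 2 ^ k" by (simp add: card_Pow)
  finally show ?thesis using code by blast
qed

lemma max_code_val: "max_code V E = 2 ^ k"
  unfolding max_code_def
proof (rule Max_eqI)
  have "{card C |C. connectivity_code V E C} \<subseteq> {..2 ^ k}" using code_upper by auto
  then show "finite {card C |C. connectivity_code V E C}" by (rule finite_subset) simp
next
  fix y assume "y \<in> {card C |C. connectivity_code V E C}"
  then show "y \<le> 2 ^ k" using code_upper by auto
next
  obtain C where C: "connectivity_code V E C" "card C = 2 ^ k" using code_lower by blast
  show "2 ^ k \<in> {card C |C. connectivity_code V E C}"
    unfolding mem_Collect_eq by (rule exI[of _ C]) (use C in simp)
qed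

end

theorem mainTheorem11:
  fixes k s :: nat and M :: "nat \<Rightarrow> (nat \<times> nat) set set"
  assumes "k \<ge> 1"
    and "s > 2 ^ (k - 1) * (2 ^ k + 1)"
    and "\<forall>i<s. card (M i) = k"
    and "\<forall>i<s. M i \<subseteq> {{(i, a), ((i + 1) mod s, b)} | a b. a < 2 * k + 1 \<and> b < 2 * k + 1}"
    and "\<forall>i<s. \<forall>e\<in>M i. \<forall>e'\<in>M i. e \<noteq> e' \<longrightarrow> e \<inter> e' = {}"
  shows "edge_connectivity ({0..<s} \<times> {0..<2 * k + 1})
            ({{(i, a), (i, b)} | i a b. i < s \<and> a < 2 * k + 1 \<and> b < 2 * k + 1 \<and> a \<noteq> b}
             \<union> (\<Union>i<s. M i)) = 2 * k
       \<and> max_code ({0..<s} \<times> {0..<2 * k + 1})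
            ({{(i, a), (i, b)} | i a b. i < s \<and> a < 2 * k + 1 \<and> b < 2 * k + 1 \<and> a \<noteq> b}
             \<union> (\<Union>i<s. M i)) = 2 ^ k"
proof -
  interpret rsetup k s M using assms by unfold_locales
  show ?thesis by (intro conjI edge_conn max_code_val)
qed

end
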